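(* Consider the linear model $\mathbf{Y} \mid \boldsymbol{\beta},\sigma^2 \sim N_n(\mathbf{X}\boldsymbol{\beta}, \sigma^2 \mathbf{I}_n)$ with $\mathbf{X}\in\mathbb{R}^{n\times p}$ fixed, and the conjugate global-local prior $$\beta_j \mid \sigma^2,\tau^2,\lambda_j^2 \sim N(0, \sigma^2\tau^2\lambda_j^2)\ \text{independently},\ j=1,\dots,p, \qquad \pi(\sigma^2)\propto \sigma^{-2},$$ with arbitrary priors on $\tau^2$ and $\lambda_1^2,\dots,\lambda_p^2$. Under this model, the conditional posterior mean of $\sigma^2$ is $$\mathbb{E}[\sigma^2 \mid \mathbf{Y}, \boldsymbol{\beta}, \tau^2, \lambda_1^2,\dots,\lambda_p^2] = \frac{\lVert \mathbf{Y} - \mathbf{X}\boldsymbol{\beta}\rVert^2 + \sum_{j=1}^p \beta_j^2/(\lambda_j^2\tau^2)}{n+p-2}.$$ Let $\boldsymbol{\beta}^*$ denote the true vector of regression coefficients, with $\lVert \boldsymbol{\beta}^*\rVert_0 = q$ and $\max_j \beta_j^{*2} = M_1$ for some constant $M_1\in\mathbb{R}$. Let $\sigma^* = \lVert \mathbf{Y} - \mathbf{X}\boldsymbol{\beta}^*\rVert/\sqrt{n}$ be the oracle estimator and suppose $\sigma^* = O(1)$. Suppose also that for every $j\in\{1,\dots,p\}$ with $\beta^*_j \neq 0$ we have $\tau^2\lambda_j^2 > M_2$ for some constant $M_2 \in \mathbb{R}$ (with $M_2>0$). Then $$\mathbb{E}[\sigma^2 \mid \mathbf{Y}, \boldsymbol{\beta}^*,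 \tau^2, \lambda_1^2,\dots,\lambda_p^2] \leq \frac{n\sigma^{*2}}{n+p-2} + \frac{q M_1/M_2}{n+p-2}.$$ In particular, as $p/n\to\infty$ and $q/p\to 0$, $$\mathbb{E}[\sigma^2 \mid \mathbf{Y}, \boldsymbol{\beta}^*, \tau^2, \lambda_1^2,\dots,\lambda_p^2] = o(1).$$
   Context: $\lVert\cdot\rVert_0$ denotes the number of nonzero entries and $\lVert\cdot\rVert$ the Euclidean norm. The conditional posterior mean is evaluated at $\boldsymbol{\beta}=\boldsymbol{\beta}^*$; terms with $\beta^*_j=0$ contribute zero to the sum. It is assumed $n+p>2$. *)

theory Defs
  imports Complex_Main "HOL-Library.Landau_Symbols"
begin

text \<open>Vectors are functions on nat with
  indices i < n (observations) and j < p (coefficients); the design matrix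
  is X :: nat => nat => real with entries X i j, i < n, j < p.\<close>

definition rss :: "nat \<Rightarrow> nat \<Rightarrow> (nat \<Rightarrow> nat \<Rightarrow> real) \<Rightarrow> (nat \<Rightarrow> real) \<Rightarrow> (nat \<Rightarrow> real) \<Rightarrow> real" where
  "rss n p X Y \<beta> = (\<Sum>i<n. (Y i - (\<Sum>j<p. X i j * \<beta> j))\<^sup>2)"

definition l0norm :: "nat \<Rightarrow> (nat \<Rightarrow> real) \<Rightarrow> nat" where
  "l0norm p \<beta> = card {j. j < p \<and> \<beta> j \<noteq> 0}"

definition sigma_star :: "nat \<Rightarrow> nat \<Rightarrow> (nat \<Rightarrow> nat \<Rightarrow> real) \<Rightarrow> (nat \<Rightarrow> real) \<Rightarrow> (nat \<Rightarrow> real) \<Rightarrow> real" where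
  "sigma_star n p X Y \<beta> = sqrt (rss n p X Y \<beta>) / sqrt (real n)"

text \<open>Conditional posterior mean E[sigma^2 | Y, beta, tau^2, lambda_1^2..lambda_p^2]
  under the conjugate global-local prior (closed form as given in the paper).
  tau2 is tau^2 and lam2 j is lambda_j^2.\<close>
definition post_mean_sigma2 ::
  "nat \<Rightarrow> nat \<Rightarrow> (nat \<Rightarrow> nat \<Rightarrow> real) \<Rightarrow> (nat \<Rightarrow> real) \<Rightarrow> (nat \<Rightarrow> real) \<Rightarrow> real \<Rightarrow> (nat \<Rightarrow> real) \<Rightarrow> real" where
  "post_mean_sigma2 n p X Y \<beta> tau2 lam2 =
     (rss n p X Y \<beta> + (\<Sum>j<p. (\<beta> j)\<^sup>2 / (lam2 j * tau2))) / (real n + real p - 2)"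

end

theory Submission
  imports Defs
begin

lemma rss_nonneg: "rss n p X Y b \<ge> 0"
  unfolding rss_def by (intro sum_nonneg) auto

lemma nsig: "real n * (sigma_star n p X Y b)\<^sup>2 = rss n p X Y b"
proof (cases "n = 0")
  case True then show ?thesis by (simp add: rss_def)
next
  case False
  have "(sigma_star n p X Y b)\<^sup>2 = rss n p X Y b / real n"
    using rss_nonneg[of n p X Y b] by (simp add: sigma_star_def power_divide)
  then show ?thesis using False by simp
qed

lemma sumterm_nonneg:
  fixes tau2 :: real and lam2 b :: "nat \<Rightarrow> real"
  assumes "tau2 > 0" "\<forall>j<p. lam2 j > 0"
  shows "(\<Sum>j<p. (b j)\<^sup>2 / (lam2 j * tau2)) \<ge> 0"
  by (intro sum_nonneg divide_nonneg_nonneg) (use assms in \<open>auto intro: less_imp_le mult_pos_pos\<close>)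

lemma sumterm_bound:
  fixes tau2 M1 M2 :: real and lam2 b :: "nat \<Rightarrow> real"
  assumes "tau2 > 0" "\<forall>j<p. lam2 j > 0" "M2 > 0"
    "M1 = Max {(b j)\<^sup>2 | j. j < p}"
    "\<forall>j<p. b j \<noteq> 0 \<longrightarrow> tau2 * lam2 j > M2"
  shows "(\<Sum>j<p. (b j)\<^sup>2 / (lam2 j * tau2)) \<le> real (l0norm p b) * M1 / M2"
proof -
  let ?S = "{j. j < p \<and> b j \<noteq> 0}"
  have fin: "finite {(b j)\<^sup>2 | j. j < p}" by simp
  have "(\<Sum>j<p. (b j)\<^sup>2 / (lam2 j * tau2)) = (\<Sum>j\<in>?S. (b j)\<^sup>2 / (lam2 j * tau2))"
    by (rule sum.mono_neutral_right) auto
  also have "\<dots> \<le> (\<Sum>j\<in>?S. M1 / M2)"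
  proof (rule sum_mono)
    fix j assume j: "j \<in> ?S"
    have le1: "(b j)\<^sup>2 \<le> M1" using assms(4) j by (auto intro!: Max_ge[OF fin])
    have lt: "tau2 * lam2 j > M2" using assms(5) j by auto
    have "(b j)\<^sup>2 / (lam2 j * tau2) \<le> (b j)\<^sup>2 / M2"
      using lt assms(3) by (intro divide_left_mono) (auto simp: mult.commute)
    also have "\<dots> \<le> M1 / M2" using le1 assms(3) by (simp add: divide_right_mono)
    finally show "(b j)\<^sup>2 / (lam2 j * tau2) \<le> M1 / M2" .
  qed
  also have "\<dots> = real (l0norm p b) * M1 / M2" by (simp add: l0norm_def)
  finally show ?thesis .
qed

lemma part1:
  assumes "n + p > 2" "tau2 > 0" "\<forall>j<p. lam2 j > 0" "M2 > 0"
    "M1 = Max {(b j)\<^sup>2 | j. j < p}"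
    "\<forall>j<p. b j \<noteq> 0 \<longrightarrow> tau2 * lam2 j > M2"
  shows "post_mean_sigma2 n p X Y b tau2 lam2
          \<le> real n * (sigma_star n p X Y b)\<^sup>2 / (real n + real p - 2)
             + real (l0norm p b) * M1 / M2 / (real n + real p - 2)"
proof -
  have D: "real n + real p - 2 > 0" using assms(1) by linarith
  have "post_mean_sigma2 n p X Y b tau2 lam2 =
     (rss n p X Y b + (\<Sum>j<p. (b j)\<^sup>2 / (lam2 j * tau2))) / (real n + real p - 2)"
    by (simp add: post_mean_sigma2_def)
  also have "\<dots> \<le> (rss n p X Y b + real (l0norm p b) * M1 / M2) / (real n + real p - 2)"
    using sumterm_bound[OF assms(2-6)] D by (intro divide_right_mono) auto
  also have "\<dots> = real n * (sigma_star n p X Y b)\<^sup>2 / (real n + real p - 2)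
             + real (l0norm p b) * M1 / M2 / (real n + real p - 2)"
    by (simp add: nsig add_divide_distrib)
  finally show ?thesis .
qed

theorem proposition3:
  shows
  "(\<forall>(n::nat) (p::nat) (X::nat \<Rightarrow> nat \<Rightarrow> real) (Y::nat \<Rightarrow> real) (\<beta>::nat \<Rightarrow> real)
       (tau2::real) (lam2::nat \<Rightarrow> real) (M1::real) (M2::real).
      n + p > 2 \<and> tau2 > 0 \<and> (\<forall>j<p. lam2 j > 0) \<and> M2 > 0 \<and>
      M1 = Max {(\<beta> j)\<^sup>2 | j. j < p} \<and>
      (\<forall>j<p. \<beta> j \<noteq> 0 \<longrightarrow> tau2 * lam2 j > M2)
      \<longrightarrow> post_mean_sigma2 n p X Y \<beta> tau2 lam2
          \<le> real n * (sigma_star n p X Y \<beta>)\<^sup>2 / (real n + real p - 2)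
             + real (l0norm p \<beta>) * M1 / M2 / (real n + real p - 2))
   \<and>
   (\<forall>(n::nat \<Rightarrow> nat) (p::nat \<Rightarrow> nat) (X::nat \<Rightarrow> nat \<Rightarrow> nat \<Rightarrow> real) (Y::nat \<Rightarrow> nat \<Rightarrow> real)
       (\<beta>::nat \<Rightarrow> nat \<Rightarrow> real) (tau2::nat \<Rightarrow> real) (lam2::nat \<Rightarrow> nat \<Rightarrow> real) (M1::real) (M2::real).
      (\<forall>k. n k + p k > 2 \<and> tau2 k > 0 \<and> (\<forall>j<p k. lam2 k j > 0) \<and>
           M1 = Max {(\<beta> k j)\<^sup>2 | j. j < p k} \<and>
           (\<forall>j<p k. \<beta> k j \<noteq> 0 \<longrightarrow> tau2 k * lam2 k j > M2)) \<and>
      M2 > 0 \<and>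
      filterlim (\<lambda>k. real (p k) / real (n k)) at_top sequentially \<and>
      ((\<lambda>k. real (l0norm (p k) (\<beta> k)) / real (p k)) \<longlongrightarrow> 0) sequentially \<and>
      (\<lambda>k. sigma_star (n k) (p k) (X k) (Y k) (\<beta> k)) \<in> O(\<lambda>_. 1)
      \<longrightarrow> (\<lambda>k. post_mean_sigma2 (n k) (p k) (X k) (Y k) (\<beta> k) (tau2 k) (lam2 k)) \<in> o(\<lambda>_. 1))"
proof (intro conjI allI impI)
  fix n p :: nat and X :: "nat \<Rightarrow> nat \<Rightarrow> real" and Y \<beta> :: "nat \<Rightarrow> real" and tau2 :: real and lam2 :: "nat \<Rightarrow> real" and M1 M2 :: real
  assume "n + p > 2 \<and> tau2 > 0 \<and> (\<forall>j<p. lam2 j > 0) \<and> M2 > 0 \<and>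
      M1 = Max {(\<beta> j)\<^sup>2 | j. j < p} \<and>
      (\<forall>j<p. \<beta> j \<noteq> 0 \<longrightarrow> tau2 * lam2 j > M2)"
  then show "post_mean_sigma2 n p X Y \<beta> tau2 lam2
          \<le> real n * (sigma_star n p X Y \<beta>)\<^sup>2 / (real n + real p - 2)
             + real (l0norm p \<beta>) * M1 / M2 / (real n + real p - 2)"
    using part1 by blast
next
  fix n p :: "nat \<Rightarrow> nat" and X Y \<beta> tau2 lam2 and M1 M2 :: real
  assume A: "(\<forall>k. n k + p k > 2 \<and> tau2 k > 0 \<and> (\<forall>j<p k. lam2 k j > 0) \<and>
           M1 = Max {(\<beta> k j)\<^sup>2 | j. j < p k} \<and>
           (\<forall>j<p k. \<beta> k j \<noteq> 0 \<longrightarrow> tau2 k * lam2 k j > M2)) \<and>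
      M2 > 0 \<and>
      filterlim (\<lambda>k. real (p k) / real (n k)) at_top sequentially \<and>
      ((\<lambda>k. real (l0norm (p k) (\<beta> k)) / real (p k)) \<longlongrightarrow> 0) sequentially \<and>
      (\<lambda>k. sigma_star (n k) (p k) (X k) (Y k) (\<beta> k)) \<in> O(\<lambda>_. 1)"
  define s where "s k = sigma_star (n k) (p k) (X k) (Y k) (\<beta> k)" for k
  define r where "r k = real (p k) / real (n k)" for k
  define D where "D k = real (n k) + real (p k) - 2" for k
  define a where "a k = real (n k) / D k" for k
  define b where "b k = real (p k) / D k" for k
  define q where "q k = real (l0norm (p k) (\<beta> k)) / real (p k)" for k
  define pm where "pm k = post_mean_sigma2 (n k) (p k) (X k) (Y k) (\<beta> k) (tau2 k) (lam2 k)" for k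
  have M2: "M2 > 0" using A by blast
  have rlim: "filterlim r at_top sequentially" using A unfolding r_def by blast
  have qlim: "(q \<longlongrightarrow> 0) sequentially" using A unfolding q_def by blast
  have sO: "s \<in> O(\<lambda>_. 1)" using A unfolding s_def by blast
  have ev2: "eventually (\<lambda>k. r k \<ge> 2) sequentially"
    using rlim by (simp add: filterlim_at_top)
  have good: "n k > 0 \<and> real (p k) \<ge> 2 * real (n k) \<and> p k \<ge> 2 \<and> D k \<ge> real (p k) / 2 \<and> D k > 0"
    if "r k \<ge> 2" for k
  proof -
    have n0: "n k > 0" using that by (cases "n k = 0") (auto simp: r_def)
    hence "real (p k) \<ge> 2 * real (n k)" using that by (simp add: r_def field_simps)
    moreover have "p k \<ge> 2" using calculation n0 by linarith
    ultimately show ?thesis using n0 by (simp add: D_def)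
  qed
  have alim: "(a \<longlongrightarrow> 0) sequentially"
  proof (rule tendsto_sandwich[where f="\<lambda>_. 0" and h="\<lambda>k. 2 * inverse (r k)"])
    show "eventually (\<lambda>k. 0 \<le> a k) sequentially"
      using ev2
    proof eventually_elim
      case (elim k)
      then have "D k > 0" using good by blast
      then show ?case by (simp add: a_def)
    qed
    show "eventually (\<lambda>k. a k \<le> 2 * inverse (r k)) sequentially"
      using ev2
    proof eventually_elim
      case (elim k)
      note g = good[OF elim]
      have "a k = real (n k) / D k" by (simp add: a_def)
      also have "\<dots> \<le> real (n k) / (real (p k) / 2)"
        using g by (intro divide_left_mono) auto
      also have "\<dots> = 2 * inverse (r k)" by (simp add: r_def field_simps)
      finally show ?case .
    qed
    show "((\<lambda>_. 0::real) \<longlongrightarrow> 0) sequentially" by simp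
    have "((\<lambda>k. inverse (r k)) \<longlongrightarrow> 0) sequentially"
      using rlim by (rule tendsto_inverse_0_at_top)
    then show "((\<lambda>k. 2 * inverse (r k)) \<longlongrightarrow> 0) sequentially"
      using tendsto_mult_right_zero by blast
  qed
  have ao: "a \<in> o(\<lambda>_. 1)" using alim by (intro smalloI_tendsto) auto
  have qo: "q \<in> o(\<lambda>_. 1)" using qlim by (intro smalloI_tendsto) auto
  have bO: "b \<in> O(\<lambda>_. 1)"
  proof (rule bigoI[where c=2])
    show "eventually (\<lambda>k. norm (b k) \<le> 2 * norm (1::real)) sequentially"
      using ev2
    proof eventually_elim
      case (elim k)
      note g = good[OF elim]
      have "b k \<le> 2" using g by (simp add: b_def field_simps)
      moreover have "b k \<ge> 0" using g by (simp add: b_def)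
      ultimately show ?case by simp
    qed
  qed
  have s2: "(\<lambda>k. s k * s k) \<in> O(\<lambda>_. 1)"
    using landau_o.big_mult[OF sO sO] by simp
  have t1: "(\<lambda>k. (s k * s k) * a k) \<in> o(\<lambda>_. 1)"
    using landau_o.big_small_mult[OF s2 ao] by simp
  have t2: "(\<lambda>k. b k * q k) \<in> o(\<lambda>_. 1)"
    using landau_o.big_small_mult[OF bO qo] by simp
  have t2': "(\<lambda>k. b k * q k * (M1 / M2)) \<in> o(\<lambda>_. 1)"
  proof (cases "M1 / M2 = 0")
    case True
    then have "(\<lambda>k. b k * q k * (M1 / M2)) = (\<lambda>_. 0)" by (auto simp del: divide_eq_0_iff)
    then show ?thesis by simp
  next
    case False then show ?thesis using t2 by (subst landau_o.small.cmult_in_iff') auto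
  qed
  define g where "g k = (s k * s k) * a k + b k * q k * (M1 / M2)" for k
  have go: "g \<in> o(\<lambda>_. 1)" unfolding g_def using t1 t2' by (rule sum_in_smallo)
  have pmO: "pm \<in> O(g)"
  proof (rule bigoI[where c=1])
    show "eventually (\<lambda>k. norm (pm k) \<le> 1 * norm (g k)) sequentially"
      using ev2
    proof eventually_elim
      case (elim k)
      note g = good[OF elim]
      have Ak: "n k + p k > 2 \<and> tau2 k > 0 \<and> (\<forall>j<p k. lam2 k j > 0) \<and>
           M1 = Max {(\<beta> k j)\<^sup>2 | j. j < p k} \<and>
           (\<forall>j<p k. \<beta> k j \<noteq> 0 \<longrightarrow> tau2 k * lam2 k j > M2)" using A by blast
      have le: "pm k \<le> real (n k) * (s k)\<^sup>2 / D k + real (l0norm (p k) (\<beta> k)) * M1 / M2 / D k"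
        unfolding pm_def s_def D_def using part1 Ak M2 by blast
      have eq: "real (n k) * (s k)\<^sup>2 / D k + real (l0norm (p k) (\<beta> k)) * M1 / M2 / D k = g k"
        using g by (simp add: g_def a_def b_def q_def power2_eq_square field_simps)
      have ge: "pm k \<ge> 0"
        unfolding pm_def post_mean_sigma2_def
        using rss_nonneg sumterm_nonneg[of "tau2 k" "p k" "lam2 k"] Ak g
        by (intro divide_nonneg_pos add_nonneg_nonneg) (auto simp: D_def)
      show ?case using le eq ge by simp
    qed
  qed
  show "(\<lambda>k. post_mean_sigma2 (n k) (p k) (X k) (Y k) (\<beta> k) (tau2 k) (lam2 k)) \<in> o(\<lambda>_. 1)"
    using landau_o.big_small_trans[OF pmO go] unfolding pm_def .
qed

end
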